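(* Let $P$ and $Q$ be locally finite posets and let $f:P\to Q$, $g:Q\to P$ be order-preserving maps forming a Galois connection $f\dashv g$, i.e. $f(x)\le_Q y \iff x\le_P g(y)$ for all $x\in P$, $y\in Q$. Extend $f$ linearly to a map $\mathbf{k}P\to\mathbf{k}Q$. For $x\in P$ and $a\in Q$ let $\omega_x^P=\sum_{x\le_P y}\mu_P(x,y)\,y$ and $\omega_a^Q=\sum_{a\le_Q b}\mu_Q(a,b)\,b$. Then for every $x\in P$, \[ f(\omega_x^P)=\sum_{a\in Q\,:\,g(a)=x}\omega_a^Q. \]
   Context: $\mathbf{k}$ is a field of characteristic $0$. For a poset $P$, $\mathbf{k}P$ denotes the vector space with basis the elements of $P$ (the linearization of $P$). $\mu_P$ denotes the Möbius function of $P$: $\mu_P(x,x)=1$ and $\mu_P(x,y)=-\sum_{x\le z<y}\mu_P(x,z)$ for $x<y$ (and $0$ if $x\not\le y$). The elements $\omega_x^P$ are called the inverted basis of $\mathbf{k}P$. (Sums are assumed to make sense, e.g. for the relevant posets finite.) *)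

theory Defs
  imports Main "HOL-Library.Poly_Mapping"
begin

class locally_finite_order = order +
  assumes finite_atLeastAtMost_lf: "finite {x..y}"

function mobius :: "'a::locally_finite_order \<Rightarrow> 'a \<Rightarrow> 'k::comm_ring_1" where
  "mobius x y = (if x = y then 1
                 else if x < y then - (\<Sum>z\<in>{x..<y}. mobius x z)
                 else 0)"
  by auto
termination
proof (relation "measure (\<lambda>(x, y). card {x..y})")
  fix x y z :: 'a
  assume "x \<noteq> y" "x < y" "z \<in> {x..<y}"
  then have "{x..z} \<subset> {x..y}" by auto
  then show "((x, z), x, y) \<in> measure (\<lambda>(x, y). card {x..y})"
    by (simp add: psubset_card_mono finite_atLeastAtMost_lf)
qed auto

text \<open>Linearization kP of a poset: finitely supported formal combinations (type a =>0 k).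
  Linear extension of a map f : P to Q to kP to kQ.\<close>
definition lin_ext :: "('a \<Rightarrow> 'b) \<Rightarrow> ('a \<Rightarrow>\<^sub>0 'k::comm_ring_1) \<Rightarrow> ('b \<Rightarrow>\<^sub>0 'k)" where
  "lin_ext f v = (\<Sum>y\<in>Poly_Mapping.keys v. Poly_Mapping.single (f y) (Poly_Mapping.lookup v y))"

definition omega :: "'a::locally_finite_order \<Rightarrow> ('a \<Rightarrow>\<^sub>0 'k::comm_ring_1)" where
  "omega x = (\<Sum>y\<in>{x..}. Poly_Mapping.single y (mobius x y))"

end

theory Submission
  imports Defs
begin

declare mobius.simps[simp del]

lemma mob_sum:
  fixes x y :: "'a::locally_finite_order"
  assumes "x \<le> y"
  shows "(\<Sum>z\<in>{x..y}. (mobius x z :: 'k::comm_ring_1)) = (if x = y then 1 else 0)"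
proof (cases "x = y")
  case True then show ?thesis by (simp add: mobius.simps)
next
  case False
  then have lt: "x < y" using assms by simp
  have fin: "finite {x..<y}"
    by (rule finite_subset[OF _ finite_atLeastAtMost_lf[of x y]]) auto
  have "{x..y} = insert y {x..<y}" using assms by auto
  then have "(\<Sum>z\<in>{x..y}. (mobius x z :: 'k)) = mobius x y + (\<Sum>z\<in>{x..<y}. mobius x z)"
    using fin by simp
  also have "mobius x y = - (\<Sum>z\<in>{x..<y}. (mobius x z :: 'k))"
    using lt False by (subst mobius.simps) simp
  finally show ?thesis using False by simp
qed

lemma lookup_omega:
  assumes fin: "finite {x..}"
  shows "Poly_Mapping.lookup (omega x :: 'a::locally_finite_order \<Rightarrow>\<^sub>0 'k::comm_ring_1) b
     = (if x \<le> b then mobius x b else 0)"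
proof -
  have "Poly_Mapping.lookup (omega x :: 'a \<Rightarrow>\<^sub>0 'k) b
     = (\<Sum>y\<in>{x..}. (if y = b then mobius x y else 0))"
    unfolding omega_def lookup_sum by (simp add: lookup_single when_def)
  also have "\<dots> = (if x \<le> b then mobius x b else 0)"
    using fin by (simp add: sum.delta)
  finally show ?thesis .
qed

lemma lookup_lin_ext:
  assumes "finite S" "Poly_Mapping.keys v \<subseteq> S"
  shows "Poly_Mapping.lookup (lin_ext f v) b = (\<Sum>y\<in>S. if f y = b then Poly_Mapping.lookup v y else 0)"
proof -
  have "Poly_Mapping.lookup (lin_ext f v) b = (\<Sum>y\<in>Poly_Mapping.keys v. if f y = b then Poly_Mapping.lookup v y else 0)"
    unfolding lin_ext_def lookup_sum by (simp add: lookup_single when_def)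
  also have "\<dots> = (\<Sum>y\<in>S. if f y = b then Poly_Mapping.lookup v y else 0)"
    by (rule sum.mono_neutral_left) (use assms in \<open>auto simp: in_keys_iff\<close>)
  finally show ?thesis .
qed

theorem mainTheorem1:
  fixes f :: "'a::locally_finite_order \<Rightarrow> 'b::locally_finite_order"
    and g :: "'b \<Rightarrow> 'a"
  assumes "mono f" and "mono g"
    and galois: "\<And>x y. f x \<le> y \<longleftrightarrow> x \<le> g y"
    and finP: "\<And>x::'a. finite {x..}"
    and finQ: "\<And>b::'b. finite {b..}"
  shows "lin_ext f (omega x :: 'a \<Rightarrow>\<^sub>0 'k::field_char_0)
           = (\<Sum>a\<in>{a. g a = x}. omega a)"
proof -
  define A where "A = {a. g a = x}"
  have Asub: "A \<subseteq> {f x..}" unfolding A_def using galois by auto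
  have finA: "finite A" using finite_subset[OF Asub finQ] .
  define L where "L b = (\<Sum>y\<in>{x..}. if f y = b then (mobius x y :: 'k) else 0)" for b
  define R where "R b = (\<Sum>a\<in>A. if a \<le> b then (mobius a b :: 'k) else 0)" for b
  have keys: "Poly_Mapping.keys (omega x :: 'a \<Rightarrow>\<^sub>0 'k) \<subseteq> {x..}"
    by (auto simp: in_keys_iff lookup_omega[OF finP] split: if_splits)
  have lhs: "Poly_Mapping.lookup (lin_ext f (omega x :: 'a \<Rightarrow>\<^sub>0 'k)) b = L b" for b
    unfolding lookup_lin_ext[OF finP keys] L_def
    by (rule sum.cong) (auto simp: lookup_omega[OF finP])
  have rhs: "Poly_Mapping.lookup (\<Sum>a\<in>A. omega a :: 'b \<Rightarrow>\<^sub>0 'k) b = R b" for b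
    unfolding lookup_sum R_def by (rule sum.cong) (auto simp: lookup_omega[OF finQ])
  have monof: "f y \<le> f z" if "y \<le> z" for y z using \<open>mono f\<close> that by (simp add: mono_def)
  have Lz: "L b = 0" if "\<not> f x \<le> b" for b
    unfolding L_def by (rule sum.neutral) (use that monof in auto)
  have Rz: "R b = 0" if "\<not> f x \<le> b" for b
    unfolding R_def by (rule sum.neutral) (use that Asub in \<open>auto dest: order_trans\<close>)
  have sumL: "(\<Sum>b\<in>{f x..c}. L b) = (if g c = x then 1 else 0)" for c
  proof -
    have "(\<Sum>b\<in>{f x..c}. L b) = (\<Sum>y\<in>{x..}. \<Sum>b\<in>{f x..c}. if f y = b then (mobius x y :: 'k) else 0)"
      unfolding L_def by (rule sum.swap)
    also have "\<dots> = (\<Sum>y\<in>{x..}. if y \<le> g c then mobius x y else 0)"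
    proof (rule sum.cong)
      fix y assume "y \<in> {x..}"
      then have "f x \<le> f y" using monof by auto
      then show "(\<Sum>b\<in>{f x..c}. if f y = b then (mobius x y :: 'k) else 0) = (if y \<le> g c then mobius x y else 0)"
        using galois[of y c] finite_atLeastAtMost_lf[of "f x" c]
        by (simp add: sum.delta')
    qed simp
    also have "\<dots> = (\<Sum>y\<in>{x..g c}. mobius x y)"
      using finP[of x] by (simp add: sum.If_cases Int_def) (rule sum.cong; auto)
    also have "\<dots> = (if g c = x then 1 else 0)"
    proof (cases "x \<le> g c")
      case True then show ?thesis using mob_sum[OF True] by auto
    next
      case False then show ?thesis by auto
    qed
    finally show ?thesis .
  qed
  have sumR: "(\<Sum>b\<in>{f x..c}. R b) = (if g c = x then 1 else 0)" for c
  proof -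
    have "(\<Sum>b\<in>{f x..c}. R b) = (\<Sum>a\<in>A. \<Sum>b\<in>{f x..c}. if a \<le> b then (mobius a b :: 'k) else 0)"
      unfolding R_def by (rule sum.swap)
    also have "\<dots> = (\<Sum>a\<in>A. if a = c then 1 else 0)"
    proof (rule sum.cong)
      fix a assume a: "a \<in> A"
      then have fa: "f x \<le> a" using Asub by auto
      have "(\<Sum>b\<in>{f x..c}. if a \<le> b then (mobius a b :: 'k) else 0) = (\<Sum>b\<in>{a..c}. mobius a b)"
        using finite_atLeastAtMost_lf[of "f x" c] fa
        by (simp add: sum.If_cases Int_def) (rule sum.cong; auto dest: order_trans)
      also have "\<dots> = (if a = c then 1 else 0)"
        by (cases "a \<le> c") (auto simp: mob_sum)
      finally show "(\<Sum>b\<in>{f x..c}. if a \<le> b then (mobius a b :: 'k) else 0) = (if a = c then 1 else 0)" .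
    qed simp
    also have "\<dots> = (if g c = x then 1 else 0)"
      using finA by (simp add: sum.delta' A_def)
    finally show ?thesis .
  qed
  have LR: "L c = R c" for c
  proof (induction "card {f x..c}" arbitrary: c rule: less_induct)
    case less
    show ?case
    proof (cases "f x \<le> c")
      case False then show ?thesis using Lz Rz by simp
    next
      case True
      have fin: "finite {f x..<c}"
        by (rule finite_subset[OF _ finite_atLeastAtMost_lf[of "f x" c]]) auto
      have ins: "{f x..c} = insert c {f x..<c}" using True by auto
      have IH: "(\<Sum>b\<in>{f x..<c}. L b) = (\<Sum>b\<in>{f x..<c}. R b)"
      proof (rule sum.cong)
        fix b assume b: "b \<in> {f x..<c}"
        have "{f x..b} \<subset> {f x..c}" using b by auto
        then have "card {f x..b} < card {f x..c}"
          by (simp add: psubset_card_mono finite_atLeastAtMost_lf)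
        then show "L b = R b" using less by blast
      qed simp
      have "L c + (\<Sum>b\<in>{f x..<c}. L b) = R c + (\<Sum>b\<in>{f x..<c}. R b)"
        using sumL[of c] sumR[of c] ins fin by simp
      then show ?thesis using IH by simp
    qed
  qed
  show ?thesis
    by (rule poly_mapping_eqI) (simp add: lhs rhs[unfolded A_def] LR)
qed

end
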